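(* Let $(X,d)$ be a metric space, $\mu$ a non-atomic Borel measure on $X$, $m$ a Borel measure on $X$ and $0<p<\infty$. If a function $f:X\to\mathbb R$ has a $p$-weak upper gradient $\rho\in L^p(m)$, then $f$ is $ACC_p$.
   Context: A path is a continuous map $\gamma:[a,b]\to X$; a subpath is a restriction to a subinterval, trivial if that interval is a point; $\mathrm{Im}(\gamma)=\gamma([a,b])$. $\mu$ non-atomic: $\mu(\{x\})=0$ for all $x$. $\Gamma^\mu$ is the set of all non-trivial injective paths $\gamma$ with $0<\mu(\mathrm{Im}(\tilde\gamma))<\infty$ for every non-trivial subpath $\tilde\gamma$. For Borel $g\ge0$, $\int_\gamma g:=\int_{\mathrm{Im}(\gamma)}g\,d\mu$. For $\gamma:[a,b]\to X$ in $\Gamma^\mu$, $h(\gamma)=\mu(\mathrm{Im}(\gamma))$ and $\nu_\gamma(x)=\mu(\gamma([a,x]))$ is a bijection of $[a,b]$ onto $[0,h(\gamma)]$; the $\mu$-arc length parametrization is $\gamma_h=\gamma\circ\nu_\gamma^{-1}:[0,h(\gamma)]\to X$. For $\Gamma\subset\Gamma^\mu$, $\mathrm{Mod}_p(\Gamma)=\inf\int_Xg^p\,dm$ over Borel $g\ge0$ with $\int_\gamma g\ge1$ for all $\gamma\in\Gamma$; "$p$-almost every path" means all paths of $\Gamma^\mu$ outside a family of $p$-modulus zero. A Borel $\rho\ge0$ is a $p$-weak upper gradient of $f$ if $|f(x)-f(y)|\le\int_\gamma\rho$ for $p$-almost every $\gamma\in\Gamma^\mu$ with endpoints $x,y$.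 $f$ is $ACC_p$ if $f\circ\gamma_h:[0,h(\gamma)]\to\mathbb R$ is absolutely continuous for $p$-almost every $\gamma\in\Gamma^\mu$. *)

theory Defs
  imports "HOL-Analysis.Analysis"
begin

text \<open>A path is represented by a triple (a, b, g): the map g restricted to the compact
  interval {a..b}.  Only the values of g on {a..b} are ever used.\<close>
type_synonym 'a path_t = "real \<times> real \<times> (real \<Rightarrow> 'a)"

definition path_im :: "'a path_t \<Rightarrow> 'a set" where
  "path_im P = (case P of (a, b, g) \<Rightarrow> g ` {a..b})"

definition non_atomic :: "'a measure \<Rightarrow> bool" where
  "non_atomic \<mu> \<longleftrightarrow> (\<forall>x. emeasure \<mu> {x} = 0)"

definition Gamma_mu :: "'a::metric_space measure \<Rightarrow> 'a path_t set" where
  "Gamma_mu \<mu> = {(a, b, g). a < b \<and> continuous_on {a..b} g \<and> inj_on g {a..b} \<and>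
      (\<forall>c d. a \<le> c \<and> c < d \<and> d \<le> b \<longrightarrow>
          0 < emeasure \<mu> (g ` {c..d}) \<and> emeasure \<mu> (g ` {c..d}) < \<infinity>)}"

definition line_int :: "'a measure \<Rightarrow> ('a \<Rightarrow> ennreal) \<Rightarrow> 'a path_t \<Rightarrow> ennreal" where
  "line_int \<mu> g P = (\<integral>\<^sup>+ x \<in> path_im P. g x \<partial>\<mu>)"

definition epow :: "ennreal \<Rightarrow> real \<Rightarrow> ennreal" where
  "epow x p = (if x = top then top else ennreal (enn2real x powr p))"

definition Mod_p :: "'a::metric_space measure \<Rightarrow> 'a measure \<Rightarrow> real \<Rightarrow> 'a path_t set \<Rightarrow> ennreal" where
  "Mod_p \<mu> m p \<Gamma> = (INF g \<in> {g :: 'a \<Rightarrow> ennreal. g \<in> borel_measurable borel \<and>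
        (\<forall>P\<in>\<Gamma>. line_int \<mu> g P \<ge> 1)}. \<integral>\<^sup>+ x. epow (g x) p \<partial>m)"

definition p_ae_path :: "'a::metric_space measure \<Rightarrow> 'a measure \<Rightarrow> real \<Rightarrow> ('a path_t \<Rightarrow> bool) \<Rightarrow> bool" where
  "p_ae_path \<mu> m p Q \<longleftrightarrow> (\<exists>\<Gamma>0 \<subseteq> Gamma_mu \<mu>. Mod_p \<mu> m p \<Gamma>0 = 0 \<and>
        (\<forall>P \<in> Gamma_mu \<mu> - \<Gamma>0. Q P))"

definition p_weak_upper_gradient :: "'a::metric_space measure \<Rightarrow> 'a measure \<Rightarrow> real \<Rightarrow>
    ('a \<Rightarrow> real) \<Rightarrow> ('a \<Rightarrow> real) \<Rightarrow> bool" where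
  "p_weak_upper_gradient \<mu> m p f \<rho> \<longleftrightarrow>
     \<rho> \<in> borel_measurable borel \<and> (\<forall>x. 0 \<le> \<rho> x) \<and>
     p_ae_path \<mu> m p (\<lambda>(a, b, g). ennreal \<bar>f (g a) - f (g b)\<bar> \<le> line_int \<mu> (\<lambda>x. ennreal (\<rho> x)) (a, b, g))"

definition abs_cont_on :: "real \<Rightarrow> real \<Rightarrow> (real \<Rightarrow> real) \<Rightarrow> bool" where
  "abs_cont_on s t F \<longleftrightarrow> (\<forall>\<epsilon>>0. \<exists>\<delta>>0. \<forall>(n::nat) (u::nat \<Rightarrow> real) v.
      (\<forall>i<n. s \<le> u i \<and> u i \<le> v i \<and> v i \<le> t) \<and>
      (\<forall>i<n. \<forall>j<n. i \<noteq> j \<longrightarrow> v i \<le> u j \<or> v j \<le> u i) \<and>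
      (\<Sum>i<n. v i - u i) < \<delta> \<longrightarrow> (\<Sum>i<n. \<bar>F (v i) - F (u i)\<bar>) < \<epsilon>)"

definition h_len :: "'a measure \<Rightarrow> 'a path_t \<Rightarrow> real" where
  "h_len \<mu> P = measure \<mu> (path_im P)"

definition nu_path :: "'a measure \<Rightarrow> 'a path_t \<Rightarrow> real \<Rightarrow> real" where
  "nu_path \<mu> P = (case P of (a, b, g) \<Rightarrow> (\<lambda>x. measure \<mu> (g ` {a..x})))"

definition arc_param :: "'a measure \<Rightarrow> 'a path_t \<Rightarrow> real \<Rightarrow> 'a" where
  "arc_param \<mu> P = (case P of (a, b, g) \<Rightarrow> g \<circ> inv_into {a..b} (nu_path \<mu> P))"

definition ACC_p :: "'a::metric_space measure \<Rightarrow> 'a measure \<Rightarrow> real \<Rightarrow> ('a \<Rightarrow> real) \<Rightarrow> bool" where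
  "ACC_p \<mu> m p f \<longleftrightarrow> p_ae_path \<mu> m p (\<lambda>P. abs_cont_on 0 (h_len \<mu> P) (f \<circ> arc_param \<mu> P))"

end

theory Submission
  imports Defs
begin

lemma epow_mono: assumes "0 \<le> p" "x \<le> y" shows "epow x p \<le> epow y p"
proof (cases "y = top")
  case True then show ?thesis by (simp add: epow_def)
next
  case False
  then have "x \<noteq> top" using assms(2) top.extremum_unique by auto
  moreover have "enn2real x \<le> enn2real y" using False assms(2) by (simp add: enn2real_mono top.not_eq_extremum)
  ultimately show ?thesis using False assms(1)
    by (simp add: epow_def powr_mono2)
qed

lemma epow_max: assumes "0 \<le> p" shows "epow (max x y) p \<le> epow x p + epow y p"
proof (cases "x \<le> y")
  case True then show ?thesis by (simp add: max_def add_increasing)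
next
  case False then show ?thesis by (simp add: max_def add_increasing2)
qed

lemma epow_meas:
  assumes "g \<in> borel_measurable borel" "sets m = sets borel"
  shows "(\<lambda>x. epow (g x) p) \<in> borel_measurable m"
proof -
  have "g \<in> borel_measurable m" using assms measurable_cong_sets by blast
  then show ?thesis unfolding epow_def by measurable
qed

lemma Mod_p_adm_mono:
  assumes "\<And>g. g \<in> borel_measurable borel \<Longrightarrow> (\<forall>P\<in>\<Gamma>. line_int \<mu> g P \<ge> 1) \<Longrightarrow> (\<forall>P\<in>\<Gamma>'. line_int \<mu> g P \<ge> 1)"
  shows "Mod_p \<mu> m p \<Gamma>' \<le> Mod_p \<mu> m p \<Gamma>"
  unfolding Mod_p_def by (rule INF_superset_mono) (use assms in auto)

lemma Mod_p_zeroD: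
  assumes "Mod_p \<mu> m p \<Gamma> = 0" "0 < e"
  shows "\<exists>g. g \<in> borel_measurable borel \<and> (\<forall>P\<in>\<Gamma>. line_int \<mu> g P \<ge> 1) \<and> (\<integral>\<^sup>+ x. epow (g x) p \<partial>m) < e"
proof -
  have "Mod_p \<mu> m p \<Gamma> < e" using assms by simp
  then show ?thesis unfolding Mod_p_def INF_less_iff by auto
qed

lemma line_int_mono: "(\<And>x. g x \<le> g' x) \<Longrightarrow> line_int \<mu> g P \<le> line_int \<mu> g' P"
  unfolding line_int_def by (intro nn_integral_mono) (simp add: mult_right_mono)

lemma Mod_p_zero_Un:
  assumes "0 < p" "Mod_p \<mu> m p A = 0" "Mod_p \<mu> m p B = 0" "sets m = sets borel"
  shows "Mod_p \<mu> m p (A \<union> B) = 0"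
proof -
  have "Mod_p \<mu> m p (A \<union> B) \<le> 0 + ennreal e" if e: "0 < e" for e :: real
  proof -
    have e2: "0 < ennreal (e/2)" using e by simp
    obtain gA where gA: "gA \<in> borel_measurable borel" "\<forall>P\<in>A. line_int \<mu> gA P \<ge> 1"
      "(\<integral>\<^sup>+ x. epow (gA x) p \<partial>m) < ennreal (e/2)" using Mod_p_zeroD[OF assms(2) e2] by blast
    obtain gB where gB: "gB \<in> borel_measurable borel" "\<forall>P\<in>B. line_int \<mu> gB P \<ge> 1"
      "(\<integral>\<^sup>+ x. epow (gB x) p \<partial>m) < ennreal (e/2)" using Mod_p_zeroD[OF assms(3) e2] by blast
    define g where "g = (\<lambda>x. max (gA x) (gB x))"
    have gm: "g \<in> borel_measurable borel" unfolding g_def using gA(1) gB(1) by measurable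
    have adm: "\<forall>P\<in>A \<union> B. line_int \<mu> g P \<ge> 1"
    proof
      fix P assume "P \<in> A \<union> B"
      then show "line_int \<mu> g P \<ge> 1"
      proof
        assume "P \<in> A" then have "1 \<le> line_int \<mu> gA P" using gA by auto
        also have "\<dots> \<le> line_int \<mu> g P" by (rule line_int_mono) (simp add: g_def)
        finally show ?thesis .
      next
        assume "P \<in> B" then have "1 \<le> line_int \<mu> gB P" using gB by auto
        also have "\<dots> \<le> line_int \<mu> g P" by (rule line_int_mono) (simp add: g_def)
        finally show ?thesis .
      qed
    qed
    have "Mod_p \<mu> m p (A \<union> B) \<le> (\<integral>\<^sup>+ x. epow (g x) p \<partial>m)"
      unfolding Mod_p_def using gm adm by (intro INF_lower) auto
    also have "\<dots> \<le> (\<integral>\<^sup>+ x. epow (gA x) p + epow (gB x) p \<partial>m)"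
      unfolding g_def using assms(1) by (intro nn_integral_mono epow_max) simp
    also have "\<dots> = (\<integral>\<^sup>+ x. epow (gA x) p \<partial>m) + (\<integral>\<^sup>+ x. epow (gB x) p \<partial>m)"
      using epow_meas[OF gA(1) assms(4)] epow_meas[OF gB(1) assms(4)] by (rule nn_integral_add)
    also have "\<dots> \<le> ennreal (e/2) + ennreal (e/2)" using gA(3) gB(3) by (intro add_mono) auto
    also have "\<dots> = 0 + ennreal e" using e by (simp flip: ennreal_plus)
    finally show ?thesis .
  qed
  note le = this
  have "Mod_p \<mu> m p (A \<union> B) \<le> 0" by (rule ennreal_le_epsilon, rule le, assumption)
  then show ?thesis by simp
qed

lemma epow_ennreal: "0 \<le> t \<Longrightarrow> epow (ennreal t) p = ennreal (t powr p)"
  by (simp add: epow_def)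

lemma path_im_sets:
  assumes "P \<in> Gamma_mu \<mu>" shows "path_im P \<in> sets borel"
proof -
  obtain a b g where P: "P = (a,b,g)" by (cases P) auto
  then have "continuous_on {a..b} g" using assms by (simp add: Gamma_mu_def)
  then have "compact (g ` {a..b})" by (intro compact_continuous_image) auto
  then show ?thesis unfolding P path_im_def by (simp add: compact_imp_closed)
qed

lemma Mod_p_inf:
  assumes "0 < p" "sets m = sets borel" "\<rho> \<in> borel_measurable borel" "\<And>x. 0 \<le> \<rho> x"
    and fin: "(\<integral>\<^sup>+ x. ennreal (\<rho> x powr p) \<partial>m) < \<infinity>"
    and smu: "sets \<mu> = sets borel"
  shows "Mod_p \<mu> m p {P\<in>Gamma_mu \<mu>. line_int \<mu> (\<lambda>x. ennreal (\<rho> x)) P = \<infinity>} = 0"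
proof -
  define C where "C = (\<integral>\<^sup>+ x. ennreal (\<rho> x powr p) \<partial>m)"
  have rm: "\<rho> \<in> borel_measurable m" using assms(2,3) measurable_cong_sets by blast
  have "Mod_p \<mu> m p {P\<in>Gamma_mu \<mu>. line_int \<mu> (\<lambda>x. ennreal (\<rho> x)) P = \<infinity>} \<le> ennreal (c powr p) * C"
    if c: "0 < c" for c :: real
  proof -
    define g where "g = (\<lambda>x. ennreal (c * \<rho> x))"
    have gm: "g \<in> borel_measurable borel" unfolding g_def using assms(3) by measurable
    have adm: "\<forall>P\<in>{P\<in>Gamma_mu \<mu>. line_int \<mu> (\<lambda>x. ennreal (\<rho> x)) P = \<infinity>}. line_int \<mu> g P \<ge> 1"
    proof
      fix P assume "P \<in> {P\<in>Gamma_mu \<mu>. line_int \<mu> (\<lambda>x. ennreal (\<rho> x)) P = \<infinity>}"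
      then have inf: "line_int \<mu> (\<lambda>x. ennreal (\<rho> x)) P = \<infinity>" and PG: "P \<in> Gamma_mu \<mu>" by simp_all
      have [measurable]: "path_im P \<in> sets \<mu>" using path_im_sets[OF PG] smu by simp
      have [measurable]: "\<rho> \<in> borel_measurable \<mu>" using assms(3) smu measurable_cong_sets by blast
      have "line_int \<mu> g P = ennreal c * line_int \<mu> (\<lambda>x. ennreal (\<rho> x)) P"
        unfolding line_int_def g_def using c assms(4)
        by (subst nn_integral_cmult[symmetric]) (auto simp: ennreal_mult mult.assoc intro!: nn_integral_cong)
      also have "\<dots> = \<infinity>" using inf c by (simp add: ennreal_mult_top)
      finally show "line_int \<mu> g P \<ge> 1" by simp
    qed
    have "Mod_p \<mu> m p {P\<in>Gamma_mu \<mu>. line_int \<mu> (\<lambda>x. ennreal (\<rho> x)) P = \<infinity>} \<le> (\<integral>\<^sup>+ x. epow (g x) p \<partial>m)"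
      unfolding Mod_p_def using gm adm by (intro INF_lower) auto
    also have "\<dots> = (\<integral>\<^sup>+ x. ennreal (c powr p) * ennreal (\<rho> x powr p) \<partial>m)"
    proof (intro nn_integral_cong)
      fix x
      have "epow (g x) p = ennreal ((c * \<rho> x) powr p)" unfolding g_def
        using c assms(4)[of x] by (intro epow_ennreal) simp
      then show "epow (g x) p = ennreal (c powr p) * ennreal (\<rho> x powr p)"
        using c assms(4)[of x] by (simp add: powr_mult ennreal_mult)
    qed
    also have "\<dots> = ennreal (c powr p) * C"
      unfolding C_def using rm by (intro nn_integral_cmult) measurable
    finally show ?thesis .
  qed
  note bound = this
  have Cfin: "C < \<infinity>" using fin C_def by simp
  have "Mod_p \<mu> m p {P\<in>Gamma_mu \<mu>. line_int \<mu> (\<lambda>x. ennreal (\<rho> x)) P = \<infinity>} \<le> 0 + ennreal e" if e: "0 < e" for e :: real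
  proof -
    define C' where "C' = enn2real C"
    have CC: "C = ennreal C'" using Cfin C'_def by (cases C) auto
    have C'0: "0 \<le> C'" using C'_def by simp
    define c where "c = (e / (C' + 1)) powr (1/p)"
    have c0: "0 < c" unfolding c_def using e C'0 by simp
    have "c powr p = e / (C' + 1)" unfolding c_def using e C'0 assms(1)
      by (simp add: powr_powr)
    then have "ennreal (c powr p) * C = ennreal (e / (C' + 1) * C')" using CC C'0 e
      by (simp add: ennreal_mult[symmetric] del: times_divide_eq_left)
    also have "\<dots> \<le> ennreal e" using e C'0
      by (intro ennreal_leI) (simp add: divide_le_eq field_simps)
    finally show ?thesis using bound[OF c0] by simp
  qed
  note le = this
  have "Mod_p \<mu> m p {P\<in>Gamma_mu \<mu>. line_int \<mu> (\<lambda>x. ennreal (\<rho> x)) P = \<infinity>} \<le> 0" by (rule ennreal_le_epsilon, rule le, assumption)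
  then show ?thesis by simp
qed

lemma Mod_p_sub:
  "Mod_p \<mu> m p {(a,b,g). \<exists>c d. a \<le> c \<and> c < d \<and> d \<le> b \<and> (c,d,g) \<in> \<Gamma>} \<le> Mod_p \<mu> m p \<Gamma>"
proof (rule Mod_p_adm_mono)
  fix h :: "'a \<Rightarrow> ennreal" assume adm: "\<forall>P\<in>\<Gamma>. line_int \<mu> h P \<ge> 1"
  show "\<forall>P\<in>{(a,b,g). \<exists>c d. a \<le> c \<and> c < d \<and> d \<le> b \<and> (c,d,g) \<in> \<Gamma>}. line_int \<mu> h P \<ge> 1"
  proof safe
    fix a b g c d assume "a \<le> c" "c < d" "d \<le> b" "(c,d,g) \<in> \<Gamma>"
    then have "1 \<le> line_int \<mu> h (c,d,g)" using adm by auto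
    also have "\<dots> \<le> line_int \<mu> h (a,b,g)" unfolding line_int_def path_im_def
      using \<open>a \<le> c\<close> \<open>d \<le> b\<close>
      by (intro nn_integral_mono) (auto split: split_indicator)
    finally show "1 \<le> line_int \<mu> h (a,b,g)" .
  qed
qed

lemma int_small:
  fixes M :: "'b measure" and r :: "'b \<Rightarrow> real"
  assumes rm[measurable]: "r \<in> borel_measurable M" and r0: "\<And>x. 0 \<le> r x"
    and S[measurable]: "S \<in> sets M" and fin: "(\<integral>\<^sup>+x\<in>S. ennreal (r x) \<partial>M) < \<infinity>" and e: "0 < e"
  shows "\<exists>\<delta>>0. \<forall>A\<in>sets M. A \<subseteq> S \<longrightarrow> emeasure M A < ennreal \<delta> \<longrightarrow> (\<integral>\<^sup>+x\<in>A. ennreal (r x) \<partial>M) < ennreal e"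
proof -
  define q where "q = (\<lambda>(n::nat) x. ennreal (max (r x - real n) 0) * indicator S x)"
  have qm[measurable]: "\<And>n. q n \<in> borel_measurable M" unfolding q_def by measurable
  have dec: "decseq q"
    unfolding q_def by (intro decseq_SucI le_funI mult_right_mono ennreal_leI) auto
  have q0: "(\<integral>\<^sup>+ x. q 0 x \<partial>M) < \<infinity>"
    using fin r0 unfolding q_def by (simp add: max_absorb1)
  have qfin: "(\<integral>\<^sup>+ x. q i x \<partial>M) < \<infinity>" for i
  proof -
    have "(\<integral>\<^sup>+ x. q i x \<partial>M) \<le> (\<integral>\<^sup>+ x. q 0 x \<partial>M)"
      using decseqD[OF dec, of 0 i] by (intro nn_integral_mono) (simp add: le_fun_def)
    then show ?thesis using q0 by simp
  qed
  have qinf: "(INF n. q n x) = 0" for x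
  proof -
    have "(INF n. q n x) \<le> q (nat \<lceil>r x\<rceil>) x" by (rule INF_lower) simp
    also have "\<dots> = 0" unfolding q_def
      by (simp add: max_absorb2 real_nat_ceiling_ge)
    finally show ?thesis by simp
  qed
  have "(INF n. integral\<^sup>N M (q n)) = (\<integral>\<^sup>+ x. (INF n. q n x) \<partial>M)"
    using nn_integral_monotone_convergence_INF_decseq[OF dec qm qfin] by simp
  also have "\<dots> = 0" by (simp add: qinf)
  finally have "(INF n. integral\<^sup>N M (q n)) < ennreal (e/2)" using e by simp
  then obtain n where n: "integral\<^sup>N M (q n) < ennreal (e/2)" unfolding INF_less_iff by auto
  define \<delta> where "\<delta> = e / (2 * (real n + 1))"
  have d0: "0 < \<delta>" unfolding \<delta>_def using e by simp
  have nd: "real n * \<delta> \<le> e / 2" unfolding \<delta>_def using e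
    by (simp add: field_simps)
  show ?thesis
  proof (intro exI[of _ \<delta>] conjI d0 ballI impI)
    fix A assume A[measurable]: "A \<in> sets M" and AS: "A \<subseteq> S" and Ad: "emeasure M A < ennreal \<delta>"
    have "(\<integral>\<^sup>+x\<in>A. ennreal (r x) \<partial>M) \<le> (\<integral>\<^sup>+ x. ennreal (real n) * indicator A x + q n x \<partial>M)"
    proof (intro nn_integral_mono)
      fix x
      show "ennreal (r x) * indicator A x \<le> ennreal (real n) * indicator A x + q n x"
      proof (cases "x \<in> A")
        case True
        then have "x \<in> S" using AS by auto
        have "ennreal (r x) \<le> ennreal (real n + max (r x - real n) 0)" by (intro ennreal_leI) auto
        also have "\<dots> = ennreal (real n) + ennreal (max (r x - real n) 0)" by (intro ennreal_plus) auto
        finally show ?thesis using True \<open>x \<in> S\<close> unfolding q_def by simp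
      qed simp
    qed
    also have "\<dots> = ennreal (real n) * emeasure M A + integral\<^sup>N M (q n)"
      by (subst nn_integral_add) (auto simp: nn_integral_cmult_indicator)
    also have "\<dots> < ennreal e"
    proof -
      have "ennreal (real n) * emeasure M A \<le> ennreal (real n) * ennreal \<delta>"
        using Ad by (intro mult_left_mono) auto
      also have "\<dots> = ennreal (real n * \<delta>)" using d0 by (simp add: ennreal_mult)
      also have "\<dots> \<le> ennreal (e/2)" using nd by (intro ennreal_leI)
      finally have a: "ennreal (real n) * emeasure M A \<le> ennreal (e/2)" .
      have "ennreal (real n) * emeasure M A + integral\<^sup>N M (q n) \<le> ennreal (e/2) + integral\<^sup>N M (q n)"
        using a by (rule add_right_mono)
      also have "\<dots> < ennreal (e/2) + ennreal (e/2)"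
        using n by (simp add: ennreal_add_left_cancel_less)
      also have "\<dots> = ennreal e" using e by (simp flip: ennreal_plus)
      finally show ?thesis .
    qed
    finally show "(\<integral>\<^sup>+x\<in>A. ennreal (r x) \<partial>M) < ennreal e" .
  qed
qed

lemma small_eq: assumes "\<And>n. \<bar>t - x\<bar> \<le> inverse (real (Suc n))" shows "t = (x::real)"
proof (rule ccontr)
  assume "t \<noteq> x"
  then have "0 < \<bar>t - x\<bar>" by simp
  then obtain n where "inverse (real (Suc n)) < \<bar>t - x\<bar>" using reals_Archimedean by blast
  with assms[of n] show False by simp
qed

locale gpath =
  fixes \<mu> :: "'a::metric_space measure" and a b :: real and g :: "real \<Rightarrow> 'a"
  assumes smu: "sets \<mu> = sets borel" and na: "non_atomic \<mu>" and G: "(a,b,g) \<in> Gamma_mu \<mu>"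
begin

lemma ab: "a < b" and cont: "continuous_on {a..b} g" and inj: "inj_on g {a..b}"
  and posfin: "\<And>c d. a \<le> c \<Longrightarrow> c < d \<Longrightarrow> d \<le> b \<Longrightarrow> 0 < emeasure \<mu> (g ` {c..d}) \<and> emeasure \<mu> (g ` {c..d}) < \<infinity>"
  using G by (auto simp: Gamma_mu_def)

lemma img_sets: assumes "a \<le> c" "d \<le> b" shows "g ` {c..d} \<in> sets \<mu>"
proof -
  have "continuous_on {c..d} g" by (rule continuous_on_subset[OF cont]) (use assms in auto)
  then have "compact (g ` {c..d})" by (intro compact_continuous_image) auto
  then show ?thesis using smu by (simp add: compact_imp_closed)
qed

lemma single_null: "{g x} \<in> null_sets \<mu>"
  using na smu by (auto simp: non_atomic_def null_sets_def)

lemma img_fin: assumes "a \<le> c" "d \<le> b" shows "emeasure \<mu> (g ` {c..d}) < \<infinity>"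
proof (cases "c < d")
  case True then show ?thesis using posfin assms by auto
next
  case False
  then have "{c..d} \<subseteq> {c}" by auto
  then have "g ` {c..d} \<subseteq> {g c}" by auto
  then have "emeasure \<mu> (g ` {c..d}) \<le> emeasure \<mu> {g c}"
    using single_null by (intro emeasure_mono) auto
  then have "emeasure \<mu> (g ` {c..d}) = 0" using null_setsD1[OF single_null[of c]] by simp
  then show ?thesis by simp
qed

definition "M c d = measure \<mu> (g ` {c..d})"
definition "N x = M a x"

lemma img_oc: assumes "a \<le> c" "c \<le> d" "d \<le> b" shows "g ` {c<..d} = g ` {c..d} - {g c}"
proof
  show "g ` {c<..d} \<subseteq> g ` {c..d} - {g c}"
  proof
    fix y assume "y \<in> g ` {c<..d}"
    then obtain x where x: "x \<in> {c<..d}" "y = g x" by auto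
    have "g x \<noteq> g c"
    proof
      assume "g x = g c"
      moreover have "x \<in> {a..b}" "c \<in> {a..b}" using x assms by auto
      ultimately have "x = c" using inj unfolding inj_on_def by blast
      then show False using x by simp
    qed
    then show "y \<in> g ` {c..d} - {g c}" using x by auto
  qed
  show "g ` {c..d} - {g c} \<subseteq> g ` {c<..d}"
  proof
    fix y assume "y \<in> g ` {c..d} - {g c}"
    then obtain x where x: "x \<in> {c..d}" "y = g x" "y \<noteq> g c" by auto
    then have "x \<noteq> c" by auto
    then have "x \<in> {c<..d}" using x by auto
    then show "y \<in> g ` {c<..d}" using x by auto
  qed
qed

lemma M_add: assumes "a \<le> c" "c \<le> d" "d \<le> e" "e \<le> b" shows "M c e = M c d + M d e"
proof -
  have "{c..e} = {c..d} \<union> {d<..e}" using assms by auto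
  then have eq: "g ` {c..e} = g ` {c..d} \<union> (g ` {d..e} - {g d})"
    using img_oc[of d e] assms by (simp add: image_Un)
  have disj: "g ` {c..d} \<inter> (g ` {d..e} - {g d}) = {}"
    using assms inj unfolding inj_on_def by auto (metis atLeastAtMost_iff order_trans antisym)
  have "M c e = measure \<mu> (g ` {c..d}) + measure \<mu> (g ` {d..e} - {g d})"
    unfolding M_def eq
  proof (rule measure_Union)
    show "emeasure \<mu> (g ` {c..d}) \<noteq> \<infinity>" using img_fin assms by (simp add: less_top)
    show "emeasure \<mu> (g ` {d..e} - {g d}) \<noteq> \<infinity>"
      using img_fin[of d e] assms single_null img_sets by (simp add: emeasure_Diff_null_set less_top)
  qed (use assms img_sets[of c d] img_sets[of d e] null_setsD2[OF single_null[of d]] disj in \<open>auto intro: sets.Diff\<close>)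
  also have "measure \<mu> (g ` {d..e} - {g d}) = M d e"
    unfolding M_def using assms img_sets single_null by (intro measure_Diff_null_set) auto
  finally show ?thesis unfolding M_def .
qed

lemma M_pos: assumes "a \<le> c" "c < d" "d \<le> b" shows "0 < M c d"
  using posfin[OF assms] unfolding M_def measure_def
  by (simp add: enn2real_positive_iff)

lemma M_nonneg: "0 \<le> M c d" unfolding M_def by simp

lemma N_diff: assumes "a \<le> x" "x \<le> y" "y \<le> b" shows "N y = N x + M x y"
  using M_add[of a x y] assms unfolding N_def by simp

lemma N_mono: assumes "a \<le> x" "x < y" "y \<le> b" shows "N x < N y"
  using N_diff[of x y] M_pos[of x y] assms by simp

lemma M_small: assumes x: "a \<le> x" "x \<le> b" and e: "0 < e"
  shows "\<exists>\<delta>>0. \<forall>y\<in>{a..b}. \<bar>y - x\<bar> < \<delta> \<longrightarrow> M (min x y) (max x y) < e"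
proof -
  define lo where "lo n = max a (x - inverse (real (Suc n)))" for n
  define hi where "hi n = min b (x + inverse (real (Suc n)))" for n
  define A where "A n = g ` {lo n..hi n}" for n
  have lohi: "a \<le> lo n" "lo n \<le> x" "x \<le> hi n" "hi n \<le> b" for n
    using x unfolding lo_def hi_def by auto
  have Asets: "range A \<subseteq> sets \<mu>" unfolding A_def using lohi img_sets by auto
  have dec: "decseq A"
  proof (rule decseq_SucI)
    fix n
    define i1 where "i1 = inverse (real (Suc n))"
    define i2 where "i2 = inverse (real (Suc (Suc n)))"
    have "i2 \<le> i1" unfolding i1_def i2_def
      by (rule le_imp_inverse_le) auto
    moreover have "lo n = max a (x - i1)" "lo (Suc n) = max a (x - i2)"
      "hi n = min b (x + i1)" "hi (Suc n) = min b (x + i2)"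
      unfolding lo_def hi_def i1_def i2_def by simp_all
    ultimately have "lo n \<le> lo (Suc n)" "hi (Suc n) \<le> hi n" by auto
    then show "A (Suc n) \<subseteq> A n" unfolding A_def by auto
  qed
  have Afin: "emeasure \<mu> (A n) \<noteq> \<infinity>" for n
    unfolding A_def using img_fin lohi by (simp add: less_top)
  have inter: "(\<Inter>n. A n) = {g x}"
  proof
    show "{g x} \<subseteq> (\<Inter>n. A n)" unfolding A_def using lohi by auto
    show "(\<Inter>n. A n) \<subseteq> {g x}"
    proof
      fix z assume z: "z \<in> (\<Inter>n. A n)"
      then have "z \<in> A 0" by auto
      then obtain t0 where t0: "t0 \<in> {lo 0..hi 0}" "z = g t0" unfolding A_def by auto
      have "\<bar>t0 - x\<bar> \<le> inverse (real (Suc n))" for n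
      proof -
        have "z \<in> A n" using z by auto
        then obtain t where t: "t \<in> {lo n..hi n}" "z = g t" unfolding A_def by auto
        have "t = t0" using inj t t0 lohi unfolding inj_on_def
          by (metis atLeastAtMost_iff order_trans)
        then show ?thesis using t unfolding lo_def hi_def by auto
      qed
      then have "t0 = x" by (rule small_eq)
      then show "z \<in> {g x}" using t0 by simp
    qed
  qed
  have "(\<lambda>n. measure \<mu> (A n)) \<longlonglongrightarrow> measure \<mu> (\<Inter>n. A n)"
    by (rule Lim_measure_decseq[OF Asets dec Afin])
  moreover have "measure \<mu> (\<Inter>n. A n) = 0" unfolding inter using null_setsD1[OF single_null[of x]]
    by (simp add: measure_def)
  ultimately have "eventually (\<lambda>n. measure \<mu> (A n) < e) sequentially"
    using e by (metis order_tendstoD(2))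
  then obtain n where n: "measure \<mu> (A n) < e" by (auto simp: eventually_sequentially)
  show ?thesis
  proof (intro exI[of _ "inverse (real (Suc n))"] conjI ballI impI)
    show "0 < inverse (real (Suc n))" by simp
    fix y assume y: "y \<in> {a..b}" "\<bar>y - x\<bar> < inverse (real (Suc n))"
    have sub: "g ` {min x y..max x y} \<subseteq> A n" unfolding A_def lo_def hi_def
      using y x by (intro image_mono) auto
    have "M (min x y) (max x y) \<le> measure \<mu> (A n)" unfolding M_def
    proof (rule measure_mono_fmeasurable[OF sub])
      show "g ` {min x y..max x y} \<in> sets \<mu>" using x y by (intro img_sets) auto
      show "A n \<in> fmeasurable \<mu>" using Asets Afin by (intro fmeasurableI) (auto simp: less_top)
    qed
    then show "M (min x y) (max x y) < e" using n by simp
  qed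
qed

lemma N_cont: "continuous_on {a..b} N"
  unfolding continuous_on_iff
proof (intro ballI allI impI)
  fix x e :: real assume x: "x \<in> {a..b}" and e: "0 < e"
  obtain \<delta> where d: "\<delta> > 0" "\<forall>y\<in>{a..b}. \<bar>y - x\<bar> < \<delta> \<longrightarrow> M (min x y) (max x y) < e"
    using M_small[OF _ _ e] x by auto
  show "\<exists>d>0. \<forall>x'\<in>{a..b}. dist x' x < d \<longrightarrow> dist (N x') (N x) < e"
  proof (intro exI[of _ \<delta>] conjI ballI impI d(1))
    fix y assume y: "y \<in> {a..b}" "dist y x < \<delta>"
    have m: "M (min x y) (max x y) < e" using d y by (auto simp: dist_real_def)
    show "dist (N y) (N x) < e"
    proof (cases "x \<le> y")
      case True then show ?thesis using N_diff[of x y] x y m M_nonneg by (auto simp: dist_real_def)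
    next
      case False then show ?thesis using N_diff[of y x] x y m M_nonneg by (auto simp: dist_real_def)
    qed
  qed
qed

lemma N_a: "N a = 0"
proof -
  have "g ` {a..a} = {g a}" by simp
  then show ?thesis unfolding N_def M_def using null_setsD1[OF single_null[of a]] by (simp add: measure_def)
qed

definition "cinv u = inv_into {a..b} N u"

lemma cinv: assumes "0 \<le> u" "u \<le> M a b" shows "cinv u \<in> {a..b}" "N (cinv u) = u"
proof -
  have "\<exists>x. a \<le> x \<and> x \<le> b \<and> N x = u"
    using IVT'[of N a u b] N_a assms N_cont ab unfolding N_def by auto
  then have uN: "u \<in> N ` {a..b}" by auto
  show "cinv u \<in> {a..b}" unfolding cinv_def by (rule inv_into_into[OF uN])
  show "N (cinv u) = u" unfolding cinv_def by (rule f_inv_into_f[OF uN])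
qed

lemma cinv_mono: assumes "0 \<le> u" "u \<le> v" "v \<le> M a b" shows "cinv u \<le> cinv v"
proof (rule ccontr)
  assume "\<not> cinv u \<le> cinv v"
  then have "N (cinv v) < N (cinv u)" using cinv[of u] cinv[of v] assms by (intro N_mono) auto
  then show False using cinv[of u] cinv[of v] assms by auto
qed

lemma nu_eq: "nu_path \<mu> (a,b,g) = N"
  by (simp add: nu_path_def N_def M_def fun_eq_iff)

lemma arc_eq: "arc_param \<mu> (a,b,g) u = g (cinv u)"
  by (simp add: arc_param_def nu_eq cinv_def)

lemma hl_eq: "h_len \<mu> (a,b,g) = M a b"
  by (simp add: h_len_def M_def path_im_def)

end

context gpath
begin

lemma acc:
  fixes f \<rho> :: "'a \<Rightarrow> real"
  assumes rm: "\<rho> \<in> borel_measurable borel" and r0: "\<And>x. 0 \<le> \<rho> x"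
    and UG: "\<And>c d. a \<le> c \<Longrightarrow> c < d \<Longrightarrow> d \<le> b \<Longrightarrow>
        ennreal \<bar>f (g c) - f (g d)\<bar> \<le> line_int \<mu> (\<lambda>x. ennreal (\<rho> x)) (c,d,g)"
    and fin: "line_int \<mu> (\<lambda>x. ennreal (\<rho> x)) (a,b,g) < \<infinity>"
  shows "abs_cont_on 0 (h_len \<mu> (a,b,g)) (f \<circ> arc_param \<mu> (a,b,g))"
  unfolding abs_cont_on_def hl_eq
proof (intro allI impI)
  fix e :: real assume e: "0 < e"
  have rmu[measurable]: "\<rho> \<in> borel_measurable \<mu>" using rm smu measurable_cong_sets by blast
  have S[measurable]: "g ` {a..b} \<in> sets \<mu>" using img_sets by simp
  have fin': "(\<integral>\<^sup>+x\<in>g ` {a..b}. ennreal (\<rho> x) \<partial>\<mu>) < \<infinity>"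
    using fin by (simp add: line_int_def path_im_def)
  obtain \<delta> where d0: "\<delta> > 0" and dS: "\<And>A. A \<in> sets \<mu> \<Longrightarrow> A \<subseteq> g ` {a..b} \<Longrightarrow> emeasure \<mu> A < ennreal \<delta> \<Longrightarrow>
      (\<integral>\<^sup>+x\<in>A. ennreal (\<rho> x) \<partial>\<mu>) < ennreal e"
    using int_small[OF rmu r0 S fin' e] by blast
  show "\<exists>\<delta>>0. \<forall>(n::nat) u v. (\<forall>i<n. 0 \<le> u i \<and> u i \<le> v i \<and> v i \<le> M a b) \<and>
      (\<forall>i<n. \<forall>j<n. i \<noteq> j \<longrightarrow> v i \<le> u j \<or> v j \<le> u i) \<and>
      (\<Sum>i<n. v i - u i) < \<delta> \<longrightarrow> (\<Sum>i<n. \<bar>(f \<circ> arc_param \<mu> (a, b, g)) (v i) - (f \<circ> arc_param \<mu> (a, b, g)) (u i)\<bar>) < e"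
  proof (intro exI[of _ \<delta>] conjI d0 allI impI)
    fix n :: nat and u v :: "nat \<Rightarrow> real"
    assume H: "(\<forall>i<n. 0 \<le> u i \<and> u i \<le> v i \<and> v i \<le> M a b) \<and>
      (\<forall>i<n. \<forall>j<n. i \<noteq> j \<longrightarrow> v i \<le> u j \<or> v j \<le> u i) \<and> (\<Sum>i<n. v i - u i) < \<delta>"
    then have bnd: "\<And>i. i < n \<Longrightarrow> 0 \<le> u i \<and> u i \<le> v i \<and> v i \<le> M a b"
      and dis: "\<And>i j. i < n \<Longrightarrow> j < n \<Longrightarrow> i \<noteq> j \<Longrightarrow> v i \<le> u j \<or> v j \<le> u i"
      and sm: "(\<Sum>i<n. v i - u i) < \<delta>" by auto
    define c where "c i = cinv (u i)" for i
    define d where "d i = cinv (v i)" for i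
    define A where "A i = g ` {c i<..d i}" for i
    have cd: "a \<le> c i" "c i \<le> d i" "d i \<le> b" "N (c i) = u i" "N (d i) = v i" if "i < n" for i
      using cinv[of "u i"] cinv[of "v i"] cinv_mono[of "u i" "v i"] bnd[OF that]
      unfolding c_def d_def by auto
    have A_eq: "A i = g ` {c i..d i} - {g (c i)}" if "i < n" for i
      unfolding A_def using img_oc cd[OF that] by simp
    have Asets: "A i \<in> sets \<mu>" if "i < n" for i
      unfolding A_eq[OF that] using img_sets cd[OF that] null_setsD2[OF single_null]
      by (auto intro: sets.Diff)
    have Ameas: "emeasure \<mu> (A i) = ennreal (v i - u i)" if "i < n" for i
    proof -
      have "emeasure \<mu> (A i) = emeasure \<mu> (g ` {c i..d i})"
        unfolding A_eq[OF that] using single_null img_sets cd[OF that]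
        by (intro emeasure_Diff_null_set) auto
      also have "\<dots> = ennreal (M (c i) (d i))" unfolding M_def
        using img_fin cd[OF that] by (intro emeasure_eq_ennreal_measure) (simp add: less_top)
      also have "M (c i) (d i) = v i - u i" using N_diff[of "c i" "d i"] cd[OF that] by simp
      finally show ?thesis .
    qed
    have trm: "ennreal \<bar>(f \<circ> arc_param \<mu> (a, b, g)) (v i) - (f \<circ> arc_param \<mu> (a, b, g)) (u i)\<bar>
        \<le> (\<integral>\<^sup>+x\<in>A i. ennreal (\<rho> x) \<partial>\<mu>)" if i: "i < n" for i
    proof (cases "c i < d i")
      case True
      have pim: "path_im (c i, d i, g) = g ` {c i..d i}" by (simp add: path_im_def)
      have "ennreal \<bar>(f \<circ> arc_param \<mu> (a, b, g)) (v i) - (f \<circ> arc_param \<mu> (a, b, g)) (u i)\<bar>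
          = ennreal \<bar>f (g (c i)) - f (g (d i))\<bar>"
        by (simp add: arc_eq c_def d_def abs_minus_commute)
      also have "\<dots> \<le> line_int \<mu> (\<lambda>x. ennreal (\<rho> x)) (c i, d i, g)"
        using UG cd[OF i] True by simp
      also have "\<dots> = (\<integral>\<^sup>+x\<in>A i. ennreal (\<rho> x) \<partial>\<mu>)"
        unfolding line_int_def pim A_eq[OF i]
      proof (rule nn_integral_cong_AE)
        show "AE x in \<mu>. ennreal (\<rho> x) * indicator (g ` {c i..d i}) x =
            ennreal (\<rho> x) * indicator (g ` {c i..d i} - {g (c i)}) x"
          using AE_not_in[OF single_null[of "c i"]] by eventually_elim (auto split: split_indicator)
      qed
      finally show ?thesis .
    next
      case False
      then have "c i = d i" using cd[OF i] by simp
      then have "u i = v i" using cd[OF i] by metis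
      then show ?thesis by simp
    qed
    have disj: "disjoint_family_on A {..<n}"
      unfolding disjoint_family_on_def
    proof (intro ballI impI)
      fix i j assume i: "i \<in> {..<n}" and j: "j \<in> {..<n}" and ij: "i \<noteq> j"
      have key: "A k \<inter> A l = {}" if k: "k < n" and l: "l < n" and vu: "v k \<le> u l" for k l
      proof -
        have "d k \<le> c l" unfolding c_def d_def using bnd[OF k] bnd[OF l] vu
          by (intro cinv_mono) auto
        show ?thesis
        proof (rule ccontr)
          assume "A k \<inter> A l \<noteq> {}"
          then obtain z where "z \<in> A k" "z \<in> A l" by blast
          then obtain s t where s: "s \<in> {c k<..d k}" and t: "t \<in> {c l<..d l}" and st: "g s = g t"
            unfolding A_def by (metis imageE)
          have "s \<in> {a..b}" "t \<in> {a..b}" using s t cd[OF k] cd[OF l] by auto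
          then have "s = t" using inj st unfolding inj_on_def by blast
          then show False using s t \<open>d k \<le> c l\<close> by auto
        qed
      qed
      show "A i \<inter> A j = {}"
        using dis[of i j] i j ij key[of i j] key[of j i] by auto
    qed
    define U where "U = (\<Union>i\<in>{..<n}. A i)"
    have Usets: "U \<in> sets \<mu>" unfolding U_def using Asets by auto
    have US: "U \<subseteq> g ` {a..b}" unfolding U_def A_def using cd by fastforce
    have "emeasure \<mu> U \<le> (\<Sum>i<n. emeasure \<mu> (A i))"
      unfolding U_def using Asets by (intro emeasure_subadditive_finite) auto
    also have "\<dots> = (\<Sum>i<n. ennreal (v i - u i))" using Ameas by simp
    also have "\<dots> = ennreal (\<Sum>i<n. v i - u i)" using bnd by (intro sum_ennreal) auto
    also have "\<dots> < ennreal \<delta>" using sm d0 bnd by (subst ennreal_less_iff) (auto intro: sum_nonneg)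
    finally have Um: "emeasure \<mu> U < ennreal \<delta>" .
    have "ennreal (\<Sum>i<n. \<bar>(f \<circ> arc_param \<mu> (a, b, g)) (v i) - (f \<circ> arc_param \<mu> (a, b, g)) (u i)\<bar>)
        = (\<Sum>i<n. ennreal \<bar>(f \<circ> arc_param \<mu> (a, b, g)) (v i) - (f \<circ> arc_param \<mu> (a, b, g)) (u i)\<bar>)"
      by (rule sum_ennreal[symmetric]) simp
    also have "\<dots> \<le> (\<Sum>i<n. (\<integral>\<^sup>+x\<in>A i. ennreal (\<rho> x) \<partial>\<mu>))"
      using trm by (intro sum_mono) auto
    also have "\<dots> = (\<integral>\<^sup>+x. (\<Sum>i<n. ennreal (\<rho> x) * indicator (A i) x) \<partial>\<mu>)"
      using Asets by (intro nn_integral_sum[symmetric]) auto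
    also have "\<dots> = (\<integral>\<^sup>+x\<in>U. ennreal (\<rho> x) \<partial>\<mu>)"
      unfolding U_def
      by (intro nn_integral_cong) (simp add: indicator_UN_disjoint[OF _ disj] sum_distrib_left)
    also have "\<dots> < ennreal e" using dS[OF Usets US Um] .
    finally show "(\<Sum>i<n. \<bar>(f \<circ> arc_param \<mu> (a, b, g)) (v i) - (f \<circ> arc_param \<mu> (a, b, g)) (u i)\<bar>) < e"
      by (subst (asm) ennreal_less_iff) auto
  qed
qed

end

lemma subpath_Gamma:
  assumes "(a,b,g) \<in> Gamma_mu \<mu>" "a \<le> c" "c < d" "d \<le> b"
  shows "(c,d,g) \<in> Gamma_mu \<mu>"
proof -
  have "continuous_on {a..b} g" "inj_on g {a..b}"
    "\<And>c' d'. a \<le> c' \<Longrightarrow> c' < d' \<Longrightarrow> d' \<le> b \<Longrightarrow> 0 < emeasure \<mu> (g ` {c'..d'}) \<and> emeasure \<mu> (g ` {c'..d'}) < \<infinity>"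
    using assms(1) by (auto simp: Gamma_mu_def)
  moreover have "{c..d} \<subseteq> {a..b}" using assms by auto
  ultimately show ?thesis using assms unfolding Gamma_mu_def
    by (auto intro: continuous_on_subset inj_on_subset)
qed

theorem lemma3p6:
  fixes \<mu> m :: "'a::metric_space measure" and p :: real
    and f \<rho> :: "'a \<Rightarrow> real"
  assumes "sets \<mu> = sets borel" and "non_atomic \<mu>"
    and "sets m = sets borel"
    and "0 < p"
    and "p_weak_upper_gradient \<mu> m p f \<rho>"
    and "(\<integral>\<^sup>+ x. ennreal (\<rho> x powr p) \<partial>m) < \<infinity>"
  shows "ACC_p \<mu> m p f"
proof -
  have rm: "\<rho> \<in> borel_measurable borel" and r0: "\<And>x. 0 \<le> \<rho> x"
    and ae: "p_ae_path \<mu> m p (\<lambda>(a, b, g). ennreal \<bar>f (g a) - f (g b)\<bar> \<le> line_int \<mu> (\<lambda>x. ennreal (\<rho> x)) (a, b, g))"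
    using assms(5) unfolding p_weak_upper_gradient_def by auto
  obtain \<Gamma>0 where G0: "\<Gamma>0 \<subseteq> Gamma_mu \<mu>" "Mod_p \<mu> m p \<Gamma>0 = 0"
    and UG0: "\<And>P. P \<in> Gamma_mu \<mu> - \<Gamma>0 \<Longrightarrow> (\<lambda>(a, b, g). ennreal \<bar>f (g a) - f (g b)\<bar> \<le> line_int \<mu> (\<lambda>x. ennreal (\<rho> x)) (a, b, g)) P"
    using ae unfolding p_ae_path_def by blast
  define \<Gamma>s where "\<Gamma>s = {(a::real,b::real,g::real\<Rightarrow>'a). \<exists>c d. a \<le> c \<and> c < d \<and> d \<le> b \<and> (c,d,g) \<in> \<Gamma>0}"
  define \<Gamma>i where "\<Gamma>i = {P\<in>Gamma_mu \<mu>. line_int \<mu> (\<lambda>x. ennreal (\<rho> x)) P = \<infinity>}"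
  define E where "E = (\<Gamma>s \<inter> Gamma_mu \<mu>) \<union> \<Gamma>i"
  have "Mod_p \<mu> m p (\<Gamma>s \<inter> Gamma_mu \<mu>) \<le> Mod_p \<mu> m p \<Gamma>s"
    by (rule Mod_p_adm_mono) auto
  also have "\<dots> \<le> Mod_p \<mu> m p \<Gamma>0" unfolding \<Gamma>s_def by (rule Mod_p_sub)
  finally have m1: "Mod_p \<mu> m p (\<Gamma>s \<inter> Gamma_mu \<mu>) = 0" using G0 by simp
  have m2: "Mod_p \<mu> m p \<Gamma>i = 0" unfolding \<Gamma>i_def
    by (rule Mod_p_inf[OF assms(4) assms(3) rm r0 assms(6) assms(1)])
  have mE: "Mod_p \<mu> m p E = 0" unfolding E_def
    by (rule Mod_p_zero_Un[OF assms(4) m1 m2 assms(3)])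
  have ES: "E \<subseteq> Gamma_mu \<mu>" unfolding E_def \<Gamma>i_def by auto
  show ?thesis unfolding ACC_p_def p_ae_path_def
  proof (intro exI[of _ E] conjI ES mE ballI)
    fix P assume P: "P \<in> Gamma_mu \<mu> - E"
    obtain a b g where Pe: "P = (a,b,g)" by (cases P) auto
    have PG: "(a,b,g) \<in> Gamma_mu \<mu>" using P Pe by simp
    interpret gpath \<mu> a b g using assms(1,2) PG by unfold_locales auto
    show "abs_cont_on 0 (h_len \<mu> P) (f \<circ> arc_param \<mu> P)"
      unfolding Pe
    proof (rule acc[OF rm r0])
      fix c d assume cd: "a \<le> c" "c < d" "d \<le> b"
      have "(c,d,g) \<in> Gamma_mu \<mu>" using subpath_Gamma[OF PG cd] .
      moreover have "(c,d,g) \<notin> \<Gamma>0" using P Pe cd unfolding E_def \<Gamma>s_def by auto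
      ultimately show "ennreal \<bar>f (g c) - f (g d)\<bar> \<le> line_int \<mu> (\<lambda>x. ennreal (\<rho> x)) (c,d,g)"
        using UG0[of "(c,d,g)"] by simp
    next
      show "line_int \<mu> (\<lambda>x. ennreal (\<rho> x)) (a,b,g) < \<infinity>"
        using P Pe unfolding E_def \<Gamma>i_def by (auto simp: less_top)
    qed
  qed
qed

end
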